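(* Let $\mathcal{G}$ be a finite collection of nonempty subsets of $\{1,\dots,d\}$, let $n=\sum_{g\in\mathcal{G}}|g|$, and let $\mathbb{R}^n$ be partitioned into pairwise disjoint index blocks $j(g)\subseteq\{1,\dots,n\}$, $|j(g)|=|g|$, one for each $g\in\mathcal{G}$, so that for $\mathbf{x}\in\mathbb{R}^n$ the subvector $\mathbf{x}_{j(g)}\in\mathbb{R}^{|g|}$ is identified with a vector supported on the coordinates in $g$. Let $M\in\{0,1\}^{d\times n}$ be the matrix with $(M\mathbf{x})_i=\sum_{g\in\mathcal{G}:\, i\in g}(\text{entry of }\mathbf{x}_{j(g)}\text{ corresponding to coordinate }i)$. Let $\lambda>0$, $w_g>0$ for $g\in\mathcal{G}$, $\mathbf{b}\in\mathbb{R}^d$ and $\rho>0$. Define the augmented Lagrangian $$L_\rho(\mathbf{x}^1,\mathbf{x}^2;\mathbf{y})=\lambda\sum_{g\in\mathcal{G}}w_g\|\mathbf{x}^1_{j(g)}\|_2+\tfrac12\|M\mathbf{x}^2-\mathbf{b}\|_2^2+\langle\mathbf{y},\mathbf{x}^1-\mathbf{x}^2\rangle+\tfrac{\rho}{2}\|\mathbf{x}^1-\mathbf{x}^2\|_2^2,$$ for $\mathbf{x}^1,\mathbf{x}^2,\mathbf{y}\in\mathbb{R}^n$, the augmented dual function $g_\rho(\mathbf{y})=\min_{\mathbf{x}^1,\mathbf{x}^2\in\mathbb{R}^n}L_\rho(\mathbf{x}^1,\mathbf{x}^2;\mathbf{y})$, and let $Y^*$ be the set of maximizers of $g_\rho$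 over $\mathbb{R}^n$. Then there exists $\tau_d>0$ such that for all $\mathbf{y}\in\mathbb{R}^n$, $$\mathrm{dist}(\mathbf{y},Y^* )\le\tau_d\|\nabla g_\rho(\mathbf{y})\|_2 .$$
   Context: This is the reformulation of the proximal operator of the latent overlapping group lasso penalty $\Omega(\boldsymbol\beta)=\inf\{\sum_g w_g\|\boldsymbol\nu^{(g)}\|_2:\sum_g\boldsymbol\nu^{(g)}=\boldsymbol\beta,\ \boldsymbol\nu^{(g)}_{g^c}=0\}$ evaluated at $\mathbf{b}$, written as $\min_{\mathbf{x}^1,\mathbf{x}^2}\lambda\sum_g w_g\|\mathbf{x}^1_{j(g)}\|_2+\frac12\|M\mathbf{x}^2-\mathbf{b}\|_2^2$ subject to $\mathbf{x}^1=\mathbf{x}^2$; $L_\rho$ is its augmented Lagrangian with multiplier $\mathbf{y}$ for the constraint $\mathbf{x}^1=\mathbf{x}^2$, and $\mathrm{dist}(\mathbf{y},Y^* )=\inf_{\mathbf{y}^*\in Y^*}\|\mathbf{y}-\mathbf{y}^*\|_2$. *)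

theory Defs
  imports "HOL-Analysis.Analysis"
begin

text \<open>Vectors in R^n are elements of real^'n with CARD('n) = n. The block j g
  (a set of indices of type 'n) is identified with the group g via the
  bijection phi g : j g -> g, so that (x_{j(g)}) entry for coordinate i is
  x $ (inv_into (j g) (phi g) i).  Vectors in R^d are functions nat => real,
  coordinates 1..d.\<close>

definition Mop :: "nat set set \<Rightarrow> (nat set \<Rightarrow> 'n::finite set) \<Rightarrow> (nat set \<Rightarrow> 'n \<Rightarrow> nat)
    \<Rightarrow> real^'n \<Rightarrow> nat \<Rightarrow> real" where
  "Mop G j phi x i = (\<Sum>g\<in>{g\<in>G. i \<in> g}. x $ (inv_into (j g) (phi g) i))"

definition block_norm :: "('n::finite) set \<Rightarrow> real^'n \<Rightarrow> real" where
  "block_norm J x = sqrt (\<Sum>k\<in>J. (x $ k)^2)"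

definition aug_lag :: "nat set set \<Rightarrow> (nat set \<Rightarrow> 'n::finite set) \<Rightarrow> (nat set \<Rightarrow> 'n \<Rightarrow> nat)
    \<Rightarrow> nat \<Rightarrow> real \<Rightarrow> (nat set \<Rightarrow> real) \<Rightarrow> (nat \<Rightarrow> real) \<Rightarrow> real
    \<Rightarrow> real^'n \<Rightarrow> real^'n \<Rightarrow> real^'n \<Rightarrow> real" where
  "aug_lag G j phi d lam w b rho x1 x2 y =
     lam * (\<Sum>g\<in>G. w g * block_norm (j g) x1)
     + 1/2 * (\<Sum>i\<in>{1..d}. (Mop G j phi x2 i - b i)^2)
     + inner y (x1 - x2)
     + rho / 2 * (norm (x1 - x2))^2"

definition aug_dual :: "nat set set \<Rightarrow> (nat set \<Rightarrow> 'n::finite set) \<Rightarrow> (nat set \<Rightarrow> 'n \<Rightarrow> nat)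
    \<Rightarrow> nat \<Rightarrow> real \<Rightarrow> (nat set \<Rightarrow> real) \<Rightarrow> (nat \<Rightarrow> real) \<Rightarrow> real
    \<Rightarrow> real^'n \<Rightarrow> real" where
  "aug_dual G j phi d lam w b rho y =
     (INF p\<in>UNIV. aug_lag G j phi d lam w b rho (fst p) (snd p) y)"

definition dual_maximizers :: "(real^'n::finite \<Rightarrow> real) \<Rightarrow> (real^'n) set" where
  "dual_maximizers f = {y. \<forall>y'. f y' \<le> f y}"

end

theory Submission
  imports Defs
begin


lemma conv_min_ineq:
  fixes F P :: "real \<Rightarrow> real"
  assumes min: "\<And>t. 0 < t \<Longrightarrow> t \<le> 1 \<Longrightarrow> F 0 + P 0 \<le> F t + P t"
    and cvx: "\<And>t. 0 \<le> t \<Longrightarrow> t \<le> 1 \<Longrightarrow> F t \<le> (1 - t) * F 0 + t * F 1"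
    and quad: "\<And>t. P t = P 0 + t * L + t^2 * S"
  shows "F 1 - F 0 + L \<ge> 0"
proof (rule ccontr)
  assume "\<not> ?thesis"
  hence A: "F 1 - F 0 + L < 0" by simp
  define t where "t = min 1 (- (F 1 - F 0 + L) / (2 * (\<bar>S\<bar> + 1)))"
  have t0: "0 < t" using A by (auto simp: t_def)
  have t1: "t \<le> 1" by (simp add: t_def)
  have "F 0 + P 0 \<le> F t + P t" using min t0 t1 by blast
  also have "\<dots> \<le> (1 - t) * F 0 + t * F 1 + P 0 + t * L + t^2 * S"
    using cvx[of t] t0 t1 quad[of t] by simp
  finally have "0 \<le> t * (F 1 - F 0 + L) + t^2 * S" by (simp add: algebra_simps)
  hence "0 \<le> t * ((F 1 - F 0 + L) + t * S)"
    by (simp add: power2_eq_square algebra_simps)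
  hence "0 \<le> (F 1 - F 0 + L) + t * S" using t0
    by (simp add: zero_le_mult_iff)
  moreover have "t * S \<le> t * \<bar>S\<bar>" using t0 by (simp add: mult_left_mono)
  moreover have "t * \<bar>S\<bar> < - (F 1 - F 0 + L)"
  proof -
    have "t \<le> - (F 1 - F 0 + L) / (2 * (\<bar>S\<bar> + 1))" by (simp add: t_def)
    hence "t * \<bar>S\<bar> \<le> - (F 1 - F 0 + L) / (2 * (\<bar>S\<bar> + 1)) * \<bar>S\<bar>"
      by (rule mult_right_mono) simp
    also have "\<dots> < - (F 1 - F 0 + L)"
    proof -
      define X where "X = - (F 1 - F 0 + L)"
      have Xp: "X > 0" using A by (simp add: X_def)
      have "X * \<bar>S\<bar> < X * (2 * (\<bar>S\<bar> + 1))"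
        by (rule mult_strict_left_mono) (use Xp in auto)
      hence "X / (2 * (\<bar>S\<bar> + 1)) * \<bar>S\<bar> < X"
        by (simp add: pos_divide_less_eq mult.commute mult.left_commute)
      thus ?thesis by (simp add: X_def)
    qed
    finally show ?thesis .
  qed
  ultimately show False by linarith
qed

lemma quad_min:
  fixes a L S :: real
  assumes "\<And>t. a \<le> a + t * L + t^2 * S"
  shows "L = 0"
proof (rule ccontr)
  assume L: "L \<noteq> 0"
  define a where "a = \<bar>S\<bar> + 1"
  have a0: "a > 0" by (simp add: a_def)
  define t where "t = - L / (2 * a)"
  have "0 \<le> t * L + t^2 * S" using assms[of t] by simp
  moreover have "t^2 * S \<le> t^2 * (a - 1)" by (simp add: a_def mult_left_mono)
  moreover have "t * L + t^2 * (a - 1) < 0"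
  proof -
    have "t * L + t^2 * (a - 1) = - (L^2 * (a + 1)) / (4 * a^2)"
      using a0 by (simp add: t_def field_simps power2_eq_square)
    also have "\<dots> < 0" using L a0
      by (intro divide_neg_pos) auto
    finally show ?thesis .
  qed
  ultimately show False by linarith
qed

lemma final_bound:
  fixes v s A k rho :: real
  assumes "v \<ge> 0" "s \<ge> 0" "A \<ge> 0" "k \<ge> 0" "rho > 0"
    and h1: "v^2 \<le> k * A * v + rho * s * v" and h2: "A^2 \<le> v * s"
  shows "v \<le> (k * (k + sqrt rho) + rho + 1) * s"
proof -
  have v1: "v \<le> k * A + rho * s"
  proof (cases "v = 0")
    case True then show ?thesis using assms by simp
  next
    case False
    hence "v > 0" using assms by simp
    have "v * v \<le> v * (k * A + rho * s)" using h1 by (simp add: power2_eq_square algebra_simps)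
    then show ?thesis using \<open>v > 0\<close> by (simp add: mult_le_cancel_left_pos)
  qed
  have A2: "A^2 \<le> k * A * s + rho * s^2"
    using h2 mult_right_mono[OF v1 \<open>s\<ge>0\<close>] by (simp add: power2_eq_square algebra_simps)
  have Ab: "A \<le> (k + sqrt rho) * s"
  proof (rule ccontr)
    assume "\<not> ?thesis"
    hence B: "A > (k + sqrt rho) * s" by simp
    have Apos: "A > 0" using B assms by (smt (verit) mult_nonneg_nonneg real_sqrt_ge_zero)
    have "A * A > A * ((k + sqrt rho) * s)" using B Apos by (simp add: mult_strict_left_mono)
    moreover have "sqrt rho * A * s \<ge> sqrt rho * ((sqrt rho) * s) * s"
    proof -
      have ks: "0 \<le> k * s" using assms by simp
      have "(k + sqrt rho) * s = k * s + sqrt rho * s" by (simp add: distrib_right)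
      hence "A \<ge> sqrt rho * s" using B ks by linarith
      thus ?thesis using assms by (simp add: mult_left_mono mult_right_mono)
    qed
    moreover have "sqrt rho * sqrt rho = rho" using assms by simp
    ultimately have "A^2 > k * A * s + rho * s^2"
      by (simp add: power2_eq_square algebra_simps)
    with A2 show False by simp
  qed
  have "v \<le> k * ((k + sqrt rho) * s) + rho * s"
    using v1 mult_left_mono[OF Ab \<open>k\<ge>0\<close>] by simp
  also have "\<dots> \<le> (k * (k + sqrt rho) + rho + 1) * s" using assms by (simp add: algebra_simps)
  finally show ?thesis .
qed



lemma Mop_add: "Mop G j phi (x + y) i = Mop G j phi x i + Mop G j phi y i"
  by (simp add: Mop_def sum.distrib)
lemma Mop_scale: "Mop G j phi (c *\<^sub>R x) i = c * Mop G j phi x i"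
  by (simp add: Mop_def sum_distrib_left)
lemma Mop_diff: "Mop G j phi (x - y) i = Mop G j phi x i - Mop G j phi y i"
  by (simp add: Mop_def sum_subtractf)
lemma Mop_neg: "Mop G j phi (- x) i = - Mop G j phi x i"
  by (simp add: Mop_def sum_negf)
lemma Mop_zero: "Mop G j phi 0 i = 0"
  by (simp add: Mop_def)

lemma Mop_bound:
  assumes "finite G"
  shows "(\<Sum>i\<in>{1..d}. (Mop G j phi v i)^2) \<le> (sqrt (real d) * real (card G))^2 * (norm v)^2"
proof -
  have "\<bar>Mop G j phi v i\<bar> \<le> real (card G) * norm v" for i
  proof -
    have "\<bar>Mop G j phi v i\<bar> \<le> (\<Sum>g\<in>{g\<in>G. i \<in> g}. \<bar>v $ (inv_into (j g) (phi g) i)\<bar>)"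
      unfolding Mop_def by (rule sum_abs)
    also have "\<dots> \<le> real (card {g\<in>G. i \<in> g}) * norm v"
      by (rule sum_bounded_above) (rule component_le_norm_cart)
    also have "\<dots> \<le> real (card G) * norm v"
      using assms by (intro mult_right_mono) (auto intro: card_mono)
    finally show ?thesis .
  qed
  hence "(Mop G j phi v i)^2 \<le> (real (card G) * norm v)^2" for i
    by (metis abs_ge_zero order_trans power2_abs power_mono)
  hence "(\<Sum>i\<in>{1..d}. (Mop G j phi v i)^2) \<le> (\<Sum>i\<in>{1..d}. (real (card G) * norm v)^2)"
    by (rule sum_mono)
  also have "\<dots> = (sqrt (real d) * real (card G))^2 * (norm v)^2"
    by (simp add: power_mult_distrib)
  finally show ?thesis .
qed

definition restr :: "'n::finite set \<Rightarrow> real^'n \<Rightarrow> real^'n" where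
  "restr J x = (\<chi> k. if k \<in> J then x $ k else 0)"

lemma block_norm_restr: "block_norm J x = norm (restr J x)"
proof -
  have "(\<Sum>k\<in>J. (x $ k)^2) = (\<Sum>k\<in>UNIV. (restr J x $ k)^2)"
  proof -
    have "(\<Sum>k\<in>UNIV. (restr J x $ k)^2) = (\<Sum>k\<in>UNIV. if k \<in> J then (x $ k)^2 else 0)"
      by (rule sum.cong) (auto simp: restr_def)
    also have "\<dots> = (\<Sum>k\<in>J. (x $ k)^2)" by (simp add: sum.If_cases)
    finally show ?thesis by simp
  qed
  thus ?thesis by (simp add: block_norm_def norm_vec_def L2_set_def)
qed

lemma restr_lin: "restr J (a *\<^sub>R x + c *\<^sub>R y) = a *\<^sub>R restr J x + c *\<^sub>R restr J y"
  by (simp add: restr_def vec_eq_iff)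

lemma block_norm_convex:
  assumes "0 \<le> t" "t \<le> 1"
  shows "block_norm J ((1 - t) *\<^sub>R x + t *\<^sub>R u) \<le> (1 - t) * block_norm J x + t * block_norm J u"
proof -
  have "block_norm J ((1 - t) *\<^sub>R x + t *\<^sub>R u) = norm ((1 - t) *\<^sub>R restr J x + t *\<^sub>R restr J u)"
    by (simp add: block_norm_restr restr_lin)
  also have "\<dots> \<le> norm ((1 - t) *\<^sub>R restr J x) + norm (t *\<^sub>R restr J u)" by (rule norm_triangle_ineq)
  also have "\<dots> = (1 - t) * block_norm J x + t * block_norm J u"
    using assms by (simp add: block_norm_restr)
  finally show ?thesis .
qed

lemma block_norm_ge: "k \<in> J \<Longrightarrow> \<bar>x $ k\<bar> \<le> block_norm J x"
  unfolding block_norm_restr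
  using component_le_norm_cart[of "restr J x" k] by (simp add: restr_def)

lemma block_norm_nonneg: "block_norm J x \<ge> 0"
  by (simp add: block_norm_def sum_nonneg)



locale lg =
  fixes G :: "nat set set" and d :: nat
    and j :: "nat set \<Rightarrow> 'n::finite set" and phi :: "nat set \<Rightarrow> 'n \<Rightarrow> nat"
    and lam rho :: real and w :: "nat set \<Rightarrow> real" and b :: "nat \<Rightarrow> real"
  assumes finG: "finite G"
    and Gsub: "\<forall>g\<in>G. g \<noteq> {} \<and> g \<subseteq> {1..d}"
    and cardn: "CARD('n) = (\<Sum>g\<in>G. card g)"
    and disj: "\<forall>g\<in>G. \<forall>h\<in>G. g \<noteq> h \<longrightarrow> j g \<inter> j h = {}"
    and cardj: "\<forall>g\<in>G. card (j g) = card g"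
    and lam0: "lam > 0" and w0: "\<forall>g\<in>G. w g > 0" and rho0: "rho > 0"
begin

definition "f1 x = lam * (\<Sum>g\<in>G. w g * block_norm (j g) x)"
definition "f2 x = 1/2 * (\<Sum>i\<in>{1..d}. (Mop G j phi x i - b i)^2)"
definition "ell x v = (\<Sum>i\<in>{1..d}. (Mop G j phi x i - b i) * Mop G j phi v i)"
definition "QM v = (\<Sum>i\<in>{1..d}. (Mop G j phi v i)^2)"
definition "Phi y x1 x2 = aug_lag G j phi d lam w b rho x1 x2 y"
definition "isMin y x1 x2 \<longleftrightarrow> (\<forall>u1 u2. Phi y x1 x2 \<le> Phi y u1 u2)"

lemma Phi_eq: "Phi y x1 x2 = f1 x1 + f2 x2 + inner y (x1 - x2) + rho/2 * (norm (x1 - x2))^2"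
  by (simp add: Phi_def aug_lag_def f1_def f2_def)

lemma f2_exp: "f2 (x + t *\<^sub>R v) = f2 x + t * ell x v + t^2 * (QM v / 2)"
proof -
  have "(Mop G j phi (x + t *\<^sub>R v) i - b i)^2
        = (Mop G j phi x i - b i)^2 + 2 * t * ((Mop G j phi x i - b i) * Mop G j phi v i)
          + t^2 * (Mop G j phi v i)^2" for i
    by (simp add: Mop_add Mop_scale power2_eq_square algebra_simps)
  hence "(\<Sum>i\<in>{1..d}. (Mop G j phi (x + t *\<^sub>R v) i - b i)^2)
     = (\<Sum>i\<in>{1..d}. (Mop G j phi x i - b i)^2) + 2 * t * ell x v + t^2 * QM v"
    by (simp add: sum.distrib sum_distrib_left ell_def QM_def)
  thus ?thesis by (simp add: f2_def algebra_simps)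
qed

lemma f2_sub: "f2 u = f2 x + ell x (u - x) + QM (u - x) / 2"
  using f2_exp[of x 1 "u - x"] by simp

lemma norm_exp: "(norm (a + t *\<^sub>R e))^2 = (norm a)^2 + 2 * t * inner a e + t^2 * (norm e)^2"
  by (simp only: power2_norm_eq_inner) (simp add: inner_add inner_commute power2_eq_square algebra_simps)

lemma Phi_exp:
  "Phi y (x1 + t *\<^sub>R v1) (x2 + t *\<^sub>R v2) = Phi y x1 x2 + (f1 (x1 + t *\<^sub>R v1) - f1 x1)
     + t * (ell x2 v2 + inner y (v1 - v2) + rho * inner (x1 - x2) (v1 - v2))
     + t^2 * (QM v2 / 2 + rho / 2 * (norm (v1 - v2))^2)"
proof -
  have e: "(x1 + t *\<^sub>R v1) - (x2 + t *\<^sub>R v2) = (x1 - x2) + t *\<^sub>R (v1 - v2)"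
    by (simp add: algebra_simps)
  show ?thesis
    unfolding Phi_eq e f2_exp norm_exp
    by (simp add: inner_add inner_diff algebra_simps)
qed

lemma f1_convex:
  assumes "0 \<le> t" "t \<le> 1"
  shows "f1 (x + t *\<^sub>R (u - x)) \<le> (1 - t) * f1 x + t * f1 u"
proof -
  have eq: "x + t *\<^sub>R (u - x) = (1 - t) *\<^sub>R x + t *\<^sub>R u" by (simp add: algebra_simps)
  have "(\<Sum>g\<in>G. w g * block_norm (j g) (x + t *\<^sub>R (u - x)))
      \<le> (\<Sum>g\<in>G. w g * ((1 - t) * block_norm (j g) x + t * block_norm (j g) u))"
    unfolding eq using w0 assms
    by (intro sum_mono mult_left_mono block_norm_convex) auto
  also have "\<dots> = (1 - t) * (\<Sum>g\<in>G. w g * block_norm (j g) x) + t * (\<Sum>g\<in>G. w g * block_norm (j g) u)"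
    by (simp add: distrib_left sum.distrib sum_distrib_left mult.left_commute)
  finally show ?thesis
    unfolding f1_def using lam0
    by (smt (verit, ccfv_SIG) distrib_left mult.left_commute mult_left_mono)
qed

lemma cover: "\<exists>g\<in>G. k \<in> j g"
proof -
  have "card (\<Union>(j ` G)) = (\<Sum>g\<in>G. card (j g))"
    using finG disj by (intro card_UN_disjoint) auto
  also have "\<dots> = (\<Sum>g\<in>G. card g)" using cardj by simp
  finally have "card (\<Union>(j ` G)) = card (UNIV :: 'n set)" using cardn by simp
  hence "\<Union>(j ` G) = UNIV" by (intro card_subset_eq) auto
  thus ?thesis by auto
qed

lemma Gne: "G \<noteq> {}" using cover by blast

definition "cc = lam * Min (w ` G) / real CARD('n)"

lemma cc_pos: "cc > 0"
proof -
  have "Min (w ` G) \<in> w ` G" using finG Gne by simp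
  hence "Min (w ` G) > 0" using w0 by auto
  thus ?thesis using lam0 by (simp add: cc_def)
qed

lemma f1_coercive: "f1 x \<ge> cc * norm x"
proof -
  define B where "B = (\<Sum>g\<in>G. block_norm (j g) x)"
  have "\<bar>x $ k\<bar> \<le> B" for k
  proof -
    obtain g where g: "g \<in> G" "k \<in> j g" using cover by blast
    have "\<bar>x $ k\<bar> \<le> block_norm (j g) x" using g(2) by (rule block_norm_ge)
    also have "\<dots> \<le> B" unfolding B_def
      using finG g by (intro member_le_sum) (auto simp: block_norm_nonneg)
    finally show ?thesis .
  qed
  hence "(\<Sum>k\<in>UNIV. \<bar>x $ k\<bar>) \<le> real CARD('n) * B"
    using sum_bounded_above[of UNIV "\<lambda>k. \<bar>x $ k\<bar>" B] by simp
  hence nb: "norm x \<le> real CARD('n) * B" using norm_le_l1_cart[of x] by linarith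
  have wm: "Min (w ` G) \<le> w g" if "g \<in> G" for g using finG that by simp
  have "Min (w ` G) * B \<le> (\<Sum>g\<in>G. w g * block_norm (j g) x)"
    unfolding B_def sum_distrib_left
    by (intro sum_mono mult_right_mono wm block_norm_nonneg)
  hence "lam * (Min (w ` G) * B) \<le> f1 x" unfolding f1_def using lam0 by simp
  moreover have "cc * norm x \<le> lam * Min (w ` G) * B"
  proof -
    have "cc * norm x \<le> cc * (real CARD('n) * B)" using nb cc_pos by simp
    also have "\<dots> = lam * Min (w ` G) * B" by (simp add: cc_def)
    finally show ?thesis .
  qed
  ultimately show ?thesis by (simp add: mult.assoc)
qed

lemma f1_nonneg: "f1 x \<ge> 0"
  using f1_coercive[of x] cc_pos by (smt (verit) mult_nonneg_nonneg norm_ge_zero)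

lemma QM_nonneg: "QM v \<ge> 0" by (simp add: QM_def sum_nonneg)

end


lemma sbound:
  fixes rho ny P0 s :: real
  assumes "rho > 0" "ny \<ge> 0" "P0 \<ge> 0" "s \<ge> 0" "rho / 2 * s^2 \<le> P0 + ny * s"
  shows "s \<le> (2 * ny + 2 * P0) / rho + 1"
proof (rule ccontr)
  assume "\<not> ?thesis"
  hence s1: "s > (2 * ny + 2 * P0) / rho + 1" by simp
  hence sg1: "s > 1" using assms by (smt (verit) divide_nonneg_pos)
  have "rho * s > 2 * ny + 2 * P0 + rho" using s1 assms by (simp add: field_simps)
  hence "rho * s * s > (2 * ny + 2 * P0 + rho) * s" using sg1 by (simp add: mult_strict_right_mono)
  moreover have "P0 * s \<ge> P0" using sg1 assms by (simp add: mult_le_cancel_left1)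
  moreover have "(2 * ny + 2 * P0 + rho) * s = 2 * (ny * s) + 2 * (P0 * s) + rho * s"
    by (simp add: algebra_simps)
  moreover have "rho * s \<ge> 0" using assms by simp
  moreover have "s^2 = s * s" by (simp add: power2_eq_square)
  ultimately have "rho / 2 * s^2 > P0 + ny * s" by (simp add: mult.assoc)
  thus False using assms by simp
qed

lemma x1bound:
  fixes rho ny s :: real
  assumes "rho > 0"
  shows "ny * s - rho / 2 * s^2 \<le> ny^2 / (2 * rho)"
proof -
  have "0 \<le> (ny - rho * s)^2" by simp
  hence "2 * rho * (ny * s) - rho * rho * s^2 \<le> ny^2" by (simp add: power2_eq_square algebra_simps)
  thus ?thesis using assms by (simp add: field_simps power2_eq_square)
qed

context lg begin

lemma growth:
  assumes "isMin y x1 x2"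
  shows "Phi y u1 u2 \<ge> Phi y x1 x2 + rho/2 * (norm ((u1 - u2) - (x1 - x2)))^2 + QM (u2 - x2) / 2"
proof -
  define v1 where "v1 = u1 - x1"
  define v2 where "v2 = u2 - x2"
  define L where "L = ell x2 v2 + inner y (v1 - v2) + rho * inner (x1 - x2) (v1 - v2)"
  define S where "S = QM v2 / 2 + rho / 2 * (norm (v1 - v2))^2"
  define F where "F t = f1 (x1 + t *\<^sub>R v1)" for t
  define P where "P t = Phi y (x1 + t *\<^sub>R v1) (x2 + t *\<^sub>R v2) - F t" for t
  have quad: "P t = P 0 + t * L + t^2 * S" for t
    unfolding P_def F_def L_def S_def Phi_exp[of y x1 t v1 x2 v2] by simp
  have mn: "F 0 + P 0 \<le> F t + P t" for t
    using assms unfolding isMin_def P_def by simp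
  have cv: "F t \<le> (1 - t) * F 0 + t * F 1" if "0 \<le> t" "t \<le> 1" for t
    using f1_convex[OF that, of x1 u1] by (simp add: F_def v1_def)
  have "F 1 - F 0 + L \<ge> 0" by (rule conv_min_ineq[OF mn cv quad])
  moreover have "Phi y u1 u2 = F 1 + P 1" "Phi y x1 x2 = F 0 + P 0"
    by (simp_all add: P_def v1_def v2_def)
  moreover have "S = rho/2 * (norm ((u1 - u2) - (x1 - x2)))^2 + QM (u2 - x2) / 2"
    by (simp add: S_def v1_def v2_def algebra_simps)
  moreover have "P 1 = P 0 + L + S" using quad[of 1] by simp
  ultimately show ?thesis by linarith
qed

lemma stat:
  assumes "isMin y x1 x2"
  shows "ell x2 v - inner y v - rho * inner (x1 - x2) v = 0"
proof (rule quad_min)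
  fix t
  have "Phi y (x1 + t *\<^sub>R 0) (x2 + t *\<^sub>R v) = Phi y x1 x2 + t * (ell x2 v - inner y v - rho * inner (x1 - x2) v)
      + t^2 * (QM v / 2 + rho / 2 * (norm (0 - v))^2)"
    unfolding Phi_exp by (simp add: inner_minus_right)
  moreover have "Phi y x1 x2 \<le> Phi y (x1 + t *\<^sub>R 0) (x2 + t *\<^sub>R v)" using assms isMin_def by blast
  ultimately show "Phi y x1 x2 \<le> Phi y x1 x2 + t * (ell x2 v - inner y v - rho * inner (x1 - x2) v)
      + t^2 * (QM v / 2 + rho / 2 * (norm (0 - v))^2)" by simp
qed

lemma QM_swap: "QM (a - c) = QM (c - a)"
  unfolding QM_def Mop_diff by (simp add: power2_commute)

lemma key:
  assumes "isMin y x1 x2" "isMin y' x1' x2'"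
  shows "inner (y - y') ((x1' - x2') - (x1 - x2)) \<ge> rho * (norm ((x1' - x2') - (x1 - x2)))^2 + QM (x2' - x2)"
proof -
  have g1: "Phi y x1' x2' \<ge> Phi y x1 x2 + rho/2 * (norm ((x1' - x2') - (x1 - x2)))^2 + QM (x2' - x2) / 2"
    by (rule growth[OF assms(1)])
  have g2: "Phi y' x1 x2 \<ge> Phi y' x1' x2' + rho/2 * (norm ((x1 - x2) - (x1' - x2')))^2 + QM (x2 - x2') / 2"
    by (rule growth[OF assms(2)])
  have n: "norm ((x1 - x2) - (x1' - x2')) = norm ((x1' - x2') - (x1 - x2))" by (rule norm_minus_commute)
  have q: "QM (x2 - x2') = QM (x2' - x2)" by (rule QM_swap)
  have e1: "Phi y x1' x2' - Phi y' x1' x2' = inner (y - y') (x1' - x2')"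
    by (simp add: Phi_eq inner_diff_left)
  have e2: "Phi y' x1 x2 - Phi y x1 x2 = - inner (y - y') (x1 - x2)"
    by (simp add: Phi_eq inner_diff_left)
  have g2': "Phi y' x1 x2 \<ge> Phi y' x1' x2' + rho/2 * (norm ((x1' - x2') - (x1 - x2)))^2 + QM (x2' - x2) / 2"
    using g2 unfolding n q .
  have "inner (y - y') ((x1' - x2') - (x1 - x2)) = inner (y - y') (x1' - x2') - inner (y - y') (x1 - x2)"
    by (rule inner_diff_right)
  thus ?thesis using g1 g2' e1 e2 by linarith
qed

lemma f1c: "continuous_on UNIV f1"
  unfolding f1_def block_norm_def
  by (intro continuous_intros)

lemma f2c: "continuous_on UNIV f2"
  unfolding f2_def Mop_def
  by (intro continuous_intros)

lemma Phi_cont: "continuous_on S (\<lambda>p. Phi y (fst p) (snd p))"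
proof -
  have a: "continuous_on S (\<lambda>p. f1 (fst p))"
    by (rule continuous_on_compose2[OF f1c continuous_on_fst]) auto
  have c: "continuous_on S (\<lambda>p. f2 (snd p))"
    by (rule continuous_on_compose2[OF f2c continuous_on_snd]) auto
  show ?thesis unfolding Phi_eq
    by (intro continuous_intros a c)
qed

lemma f12_cont: "continuous_on S (\<lambda>x. f1 x + f2 x)"
  by (intro continuous_intros continuous_on_subset[OF f1c] continuous_on_subset[OF f2c]) auto

lemma f2_nonneg: "f2 x \<ge> 0" by (simp add: f2_def sum_nonneg)

lemma f1_zero: "f1 0 = 0" by (simp add: f1_def block_norm_def)

end


lemma sum_cs:
  fixes a c :: "'a \<Rightarrow> real"
  shows "(\<Sum>i\<in>I. a i * c i) \<le> sqrt (\<Sum>i\<in>I. (a i)^2) * sqrt (\<Sum>i\<in>I. (c i)^2)"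
proof -
  have "(\<Sum>i\<in>I. a i * c i) \<le> sqrt ((\<Sum>i\<in>I. a i * c i)^2)" by simp
  also have "\<dots> \<le> sqrt ((\<Sum>i\<in>I. (a i)^2) * (\<Sum>i\<in>I. (c i)^2))"
    by (rule real_sqrt_le_mono) (rule Cauchy_Schwarz_ineq_sum)
  also have "\<dots> = sqrt (\<Sum>i\<in>I. (a i)^2) * sqrt (\<Sum>i\<in>I. (c i)^2)" by (rule real_sqrt_mult)
  finally show ?thesis .
qed

context lg begin

lemma exists_min: "\<exists>x1 x2. isMin y x1 x2"
proof -
  define P0 where "P0 = Phi y 0 0"
  have P0e: "P0 = f2 0" by (simp add: P0_def Phi_eq f1_zero)
  have P0nn: "P0 \<ge> 0" using f2_nonneg P0e by simp
  define ny where "ny = norm y"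
  define R1 where "R1 = (P0 + ny^2/(2*rho)) / cc"
  define S0 where "S0 = (2*ny + 2*P0)/rho + 1"
  define K where "K = cball (0::real^'n) R1 \<times> cball (0::real^'n) (R1 + S0)"
  have bnd: "norm x1 \<le> R1 \<and> norm x2 \<le> R1 + S0" if h: "Phi y x1 x2 \<le> P0" for x1 x2
  proof -
    define s where "s = norm (x1 - x2)"
    have ci: "inner y (x1 - x2) \<ge> - (ny * s)"
      using Cauchy_Schwarz_ineq2[of y "x1 - x2"] by (simp add: ny_def s_def)
    have low: "Phi y x1 x2 \<ge> cc * norm x1 - ny * s + rho/2 * s^2"
      using f1_coercive[of x1] f2_nonneg[of x2] ci unfolding Phi_eq s_def by linarith
    have "cc * norm x1 \<ge> 0" using cc_pos by simp
    hence hh: "rho / 2 * s^2 \<le> P0 + ny * s" using low h by linarith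
    have sS: "s \<le> S0" unfolding S0_def
      using sbound[OF rho0 _ P0nn _ hh] by (simp add: ny_def s_def)
    have "cc * norm x1 \<le> P0 + ny^2/(2*rho)"
      using low h x1bound[OF rho0, of ny s] by linarith
    hence n1: "norm x1 \<le> R1" unfolding R1_def using cc_pos
      by (simp add: pos_le_divide_eq mult.commute)
    have "norm x2 \<le> norm x1 + s" unfolding s_def
      using norm_triangle_ineq4[of x1 "x1 - x2"] by simp
    thus ?thesis using n1 sS by simp
  qed
  have R1nn: "R1 \<ge> 0" unfolding R1_def using cc_pos P0nn rho0 by simp
  have S0nn: "S0 \<ge> 0" unfolding S0_def using P0nn rho0 by (simp add: ny_def)
  have K0: "(0, 0) \<in> K" using R1nn S0nn by (simp add: K_def)
  have "compact K" unfolding K_def by (intro compact_Times compact_cball)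
  moreover have "K \<noteq> {}" using K0 by blast
  ultimately obtain p where pK: "p \<in> K" and pmin: "\<forall>q\<in>K. Phi y (fst p) (snd p) \<le> Phi y (fst q) (snd q)"
    using continuous_attains_inf[OF _ _ Phi_cont] by blast
  have "isMin y (fst p) (snd p)" unfolding isMin_def
  proof (intro allI)
    fix u1 u2
    show "Phi y (fst p) (snd p) \<le> Phi y u1 u2"
    proof (cases "(u1, u2) \<in> K")
      case True then show ?thesis using pmin by force
    next
      case False
      hence "\<not> (norm u1 \<le> R1 \<and> norm u2 \<le> R1 + S0)" by (simp add: K_def)
      hence "Phi y u1 u2 > P0" using bnd[of u1 u2] by linarith
      moreover have "Phi y (fst p) (snd p) \<le> P0" using pmin K0 by (force simp: P0_def)
      ultimately show ?thesis by simp
    qed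
  qed
  thus ?thesis by blast
qed

lemma exists_primal: "\<exists>x. \<forall>u. f1 x + f2 x \<le> f1 u + f2 u"
proof -
  define K where "K = cball (0::real^'n) (f2 0 / cc)"
  have K0: "0 \<in> K" using f2_nonneg cc_pos by (simp add: K_def)
  obtain x where xK: "x \<in> K" and xmin: "\<forall>u\<in>K. f1 x + f2 x \<le> f1 u + f2 u"
    using continuous_attains_inf[OF compact_cball _ f12_cont, of 0 "f2 0 / cc"] K0
    unfolding K_def by blast
  have "f1 x + f2 x \<le> f1 u + f2 u" for u
  proof (cases "u \<in> K")
    case True then show ?thesis using xmin by blast
  next
    case False
    hence "norm u > f2 0 / cc" by (simp add: K_def)
    hence "cc * norm u > f2 0" using cc_pos by (simp add: pos_divide_less_eq mult.commute)
    hence "f1 u + f2 u > f2 0" using f1_coercive[of u] f2_nonneg[of u] by linarith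
    moreover have "f1 x + f2 x \<le> f2 0" using xmin K0 f1_zero by force
    ultimately show ?thesis by simp
  qed
  thus ?thesis by blast
qed

lemma ell_add: "ell x (u + v) = ell x u + ell x v"
  by (simp add: ell_def Mop_add distrib_left sum.distrib)
lemma ell_scale: "ell x (c *\<^sub>R v) = c * ell x v"
  by (simp add: ell_def Mop_scale sum_distrib_left mult.left_commute)
lemma ell_diff: "ell x (u - v) = ell x u - ell x v"
  by (simp add: ell_def Mop_diff right_diff_distrib sum_subtractf)

lemma lin_ell: "linear (ell x)"
  by (rule linearI) (simp_all add: ell_add ell_scale)

lemma exists_dual: "\<exists>ys xs. isMin ys xs xs"
proof -
  obtain x where xm: "\<forall>u. f1 x + f2 x \<le> f1 u + f2 u" using exists_primal by blast
  define ys where "ys = adjoint (ell x) 1"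
  have iy: "inner v ys = ell x v" for v
    using adjoint_works[OF lin_ell[of x], of v 1] by (simp add: ys_def)
  have sub: "f1 u1 - f1 x + ell x (u1 - x) \<ge> 0" for u1
  proof -
    define F where "F t = f1 (x + t *\<^sub>R (u1 - x))" for t
    define P where "P t = f2 (x + t *\<^sub>R (u1 - x))" for t
    have mn: "F 0 + P 0 \<le> F t + P t" for t using xm by (simp add: F_def P_def)
    have cv: "F t \<le> (1 - t) * F 0 + t * F 1" if "0 \<le> t" "t \<le> 1" for t
      using f1_convex[OF that, of x u1] by (simp add: F_def)
    have qd: "P t = P 0 + t * ell x (u1 - x) + t^2 * (QM (u1 - x) / 2)" for t
      by (simp add: P_def f2_exp)
    have "F 1 - F 0 + ell x (u1 - x) \<ge> 0" by (rule conv_min_ineq[OF mn cv qd])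
    thus ?thesis by (simp add: F_def)
  qed
  have "isMin ys x x" unfolding isMin_def
  proof (intro allI)
    fix u1 u2
    have f2s: "f2 u2 \<ge> f2 x + ell x (u2 - x)" using f2_sub[of u2 x] QM_nonneg[of "u2 - x"] by simp
    have "inner ys (u1 - u2) = ell x (u1 - x) - ell x (u2 - x)"
      using iy[of "u1 - u2"] ell_diff[of x "u1 - x" "u2 - x"] by (simp add: inner_commute)
    moreover have "rho / 2 * (norm (u1 - u2))^2 \<ge> 0" using rho0 by simp
    ultimately show "Phi ys x x \<le> Phi ys u1 u2"
      unfolding Phi_eq using sub[of u1] f2s by simp
  qed
  thus ?thesis by blast
qed

lemma dual_eq:
  assumes "isMin y x1 x2"
  shows "aug_dual G j phi d lam w b rho y = Phi y x1 x2"
  unfolding aug_dual_def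
proof (rule cInf_eq_minimum)
  show "Phi y x1 x2 \<in> (\<lambda>p. aug_lag G j phi d lam w b rho (fst p) (snd p) y) ` UNIV"
    by (rule image_eqI[of _ _ "(x1, x2)"]) (simp_all add: Phi_def)
  fix z assume "z \<in> (\<lambda>p. aug_lag G j phi d lam w b rho (fst p) (snd p) y) ` UNIV"
  then show "Phi y x1 x2 \<le> z" using assms by (auto simp: isMin_def Phi_def)
qed

definition "xm y = (SOME p. isMin y (fst p) (snd p))"
definition "Rf y = fst (xm y) - snd (xm y)"

lemma xm_min: "isMin y (fst (xm y)) (snd (xm y))"
proof -
  obtain x1 x2 where "isMin y x1 x2" using exists_min by blast
  hence "isMin y (fst (x1, x2)) (snd (x1, x2))" by simp
  thus ?thesis unfolding xm_def by (rule someI)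
qed

lemma lip:
  assumes "isMin y x1 x2" "isMin y' x1' x2'"
  shows "rho * norm ((x1' - x2') - (x1 - x2)) \<le> norm (y - y')"
proof -
  define D where "D = (x1' - x2') - (x1 - x2)"
  have "inner (y - y') D \<ge> rho * (norm D)^2 + QM (x2' - x2)" unfolding D_def by (rule key[OF assms])
  hence "rho * (norm D)^2 \<le> norm (y - y') * norm D"
    using QM_nonneg[of "x2' - x2"] norm_cauchy_schwarz[of "y - y'" D] by linarith
  hence "norm D * (rho * norm D) \<le> norm D * norm (y - y')" by (simp add: power2_eq_square algebra_simps)
  thus ?thesis unfolding D_def[symmetric]
    by (cases "norm D = 0") (use rho0 in \<open>auto simp: mult_le_cancel_left\<close>)
qed

lemma dual_bound:
  "\<bar>aug_dual G j phi d lam w b rho y' - aug_dual G j phi d lam w b rho y - inner (y' - y) (Rf y)\<bar>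
     \<le> (norm (y' - y))^2 / rho"
proof -
  define a1 where "a1 = fst (xm y)"
  define a2 where "a2 = snd (xm y)"
  define c1 where "c1 = fst (xm y')"
  define c2 where "c2 = snd (xm y')"
  have ma: "isMin y a1 a2" and mc: "isMin y' c1 c2" using xm_min by (simp_all add: a1_def a2_def c1_def c2_def)
  have ga: "aug_dual G j phi d lam w b rho y = Phi y a1 a2" by (rule dual_eq[OF ma])
  have gc: "aug_dual G j phi d lam w b rho y' = Phi y' c1 c2" by (rule dual_eq[OF mc])
  have R: "Rf y = a1 - a2" by (simp add: Rf_def a1_def a2_def)
  have up1: "Phi y' c1 c2 \<le> Phi y' a1 a2" using mc isMin_def by blast
  have up2: "Phi y' a1 a2 = Phi y a1 a2 + inner (y' - y) (a1 - a2)" by (simp add: Phi_eq inner_diff_left)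
  have lo1: "Phi y a1 a2 \<le> Phi y c1 c2" using ma isMin_def by blast
  have lo2: "Phi y' c1 c2 = Phi y c1 c2 + inner (y' - y) (c1 - c2)" by (simp add: Phi_eq inner_diff_left)
  have lp: "rho * norm ((c1 - c2) - (a1 - a2)) \<le> norm (y - y')" by (rule lip[OF ma mc])
  have cs: "\<bar>inner (y' - y) ((c1 - c2) - (a1 - a2))\<bar> \<le> norm (y' - y) * norm ((c1 - c2) - (a1 - a2))"
    by (rule Cauchy_Schwarz_ineq2)
  have "norm (y' - y) * norm ((c1 - c2) - (a1 - a2)) \<le> norm (y' - y) * (norm (y' - y) / rho)"
    using lp rho0 by (intro mult_left_mono) (simp_all add: pos_le_divide_eq mult.commute norm_minus_commute)
  also have "\<dots> = (norm (y' - y))^2 / rho" by (simp add: power2_eq_square)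
  finally have cs2: "\<bar>inner (y' - y) ((c1 - c2) - (a1 - a2))\<bar> \<le> (norm (y' - y))^2 / rho" using cs by linarith
  have "inner (y' - y) ((c1 - c2) - (a1 - a2)) = inner (y' - y) (c1 - c2) - inner (y' - y) (a1 - a2)"
    by (rule inner_diff_right)
  moreover have "(norm (y' - y))^2 / rho \<ge> 0" using rho0 by simp
  ultimately show ?thesis unfolding ga gc R using up1 up2 lo1 lo2 cs2 by (simp add: abs_le_iff)
qed

lemma gderiv_Rf: "GDERIV (aug_dual G j phi d lam w b rho) y :> Rf y"
  unfolding gderiv_def has_derivative_at_alt
proof (intro conjI allI impI)
  show "bounded_linear (\<lambda>h. inner h (Rf y))" by (rule bounded_linear_inner_left)
  fix e :: real assume e: "e > 0"
  show "\<exists>\<delta>>0. \<forall>y'. norm (y' - y) < \<delta> \<longrightarrow>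
      norm (aug_dual G j phi d lam w b rho y' - aug_dual G j phi d lam w b rho y - inner (y' - y) (Rf y))
        \<le> e * norm (y' - y)"
  proof (intro exI[of _ "e * rho"] conjI allI impI)
    show "e * rho > 0" using e rho0 by simp
    fix y' assume h: "norm (y' - y) < e * rho"
    have "norm (aug_dual G j phi d lam w b rho y' - aug_dual G j phi d lam w b rho y - inner (y' - y) (Rf y))
        \<le> (norm (y' - y))^2 / rho" using dual_bound by simp
    also have "\<dots> = norm (y' - y) * (norm (y' - y) / rho)" by (simp add: power2_eq_square)
    also have "\<dots> \<le> norm (y' - y) * e"
      using h rho0 by (intro mult_left_mono) (simp_all add: pos_divide_le_eq)
    finally show "norm (aug_dual G j phi d lam w b rho y' - aug_dual G j phi d lam w b rho y - inner (y' - y) (Rf y))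
        \<le> e * norm (y' - y)" by (simp add: mult.commute)
  qed
qed

lemma maxim:
  assumes "isMin y x x"
  shows "y \<in> dual_maximizers (aug_dual G j phi d lam w b rho)"
  unfolding dual_maximizers_def
proof (intro CollectI allI)
  fix y'
  have "aug_dual G j phi d lam w b rho y' = Phi y' (fst (xm y')) (snd (xm y'))" by (rule dual_eq[OF xm_min])
  also have "\<dots> \<le> Phi y' x x" using xm_min isMin_def by blast
  also have "\<dots> = Phi y x x" by (simp add: Phi_eq)
  also have "\<dots> = aug_dual G j phi d lam w b rho y" by (rule dual_eq[OF assms, symmetric])
  finally show "aug_dual G j phi d lam w b rho y' \<le> aug_dual G j phi d lam w b rho y" .
qed

end


context lg begin

lemma err_bound:
  "\<exists>\<tau>>0. \<forall>y. infdist y (dual_maximizers (aug_dual G j phi d lam w b rho)) \<le> \<tau> * norm (Rf y)"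
proof -
  obtain ys xs where mys: "isMin ys xs xs" using exists_dual by blast
  define k where "k = sqrt (real d) * real (card G)"
  have k0: "k \<ge> 0" by (simp add: k_def)
  define \<tau> where "\<tau> = k * (k + sqrt rho) + rho + 1"
  have tau0: "\<tau> > 0" unfolding \<tau>_def using k0 rho0 by (simp add: add_nonneg_pos)
  have "infdist y (dual_maximizers (aug_dual G j phi d lam w b rho)) \<le> \<tau> * norm (Rf y)" for y
  proof -
    define x1 where "x1 = fst (xm y)"
    define x2 where "x2 = snd (xm y)"
    have my: "isMin y x1 x2" using xm_min by (simp add: x1_def x2_def)
    define r where "r = x1 - x2"
    have Rr: "Rf y = r" by (simp add: Rf_def r_def x1_def x2_def)
    define v where "v = y - ys"
    define s where "s = norm r"
    define A where "A = sqrt (QM (x2 - xs))"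
    have st1: "ell x2 v - inner y v - rho * inner r v = 0" unfolding r_def by (rule stat[OF my])
    have st2: "ell xs v - inner ys v = 0" using stat[OF mys, of v] by simp
    have ed: "ell x2 v - ell xs v = (\<Sum>i\<in>{1..d}. Mop G j phi (x2 - xs) i * Mop G j phi v i)"
      unfolding ell_def Mop_diff by (simp add: sum_subtractf left_diff_distrib)
    have cs1: "(\<Sum>i\<in>{1..d}. Mop G j phi (x2 - xs) i * Mop G j phi v i) \<le> A * sqrt (QM v)"
      unfolding A_def QM_def by (rule sum_cs)
    have qv: "sqrt (QM v) \<le> k * norm v"
    proof -
      have "QM v \<le> (k * norm v)^2" unfolding QM_def k_def
        using Mop_bound[OF finG, of j phi v] by (simp add: power_mult_distrib)
      hence "sqrt (QM v) \<le> sqrt ((k * norm v)^2)" by (rule real_sqrt_le_mono)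
      thus ?thesis using k0 by simp
    qed
    have A0: "A \<ge> 0" by (simp add: A_def QM_nonneg)
    have "- inner r v \<le> s * norm v" using Cauchy_Schwarz_ineq2[of r v] unfolding s_def
      by (simp add: abs_le_iff)
    hence "rho * (- inner r v) \<le> rho * (s * norm v)" by (rule mult_left_mono) (use rho0 in simp)
    hence cs2: "- (rho * inner r v) \<le> rho * s * norm v" by (simp add: mult.assoc)
    have "inner v v = inner y v - inner ys v" by (simp add: v_def inner_diff_left)
    hence "(norm v)^2 = (ell x2 v - ell xs v) - rho * inner r v"
      using st1 st2 by (simp add: power2_norm_eq_inner)
    also have "\<dots> \<le> A * (k * norm v) + rho * s * norm v"
      using ed cs1 cs2 mult_left_mono[OF qv A0] by linarith
    finally have h1: "(norm v)^2 \<le> k * A * norm v + rho * s * norm v" by (simp add: algebra_simps)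
    have kk: "inner (y - ys) ((xs - xs) - (x1 - x2)) \<ge> rho * (norm ((xs - xs) - (x1 - x2)))^2 + QM (xs - x2)"
      by (rule key[OF my mys])
    have e0: "(xs - xs) - (x1 - x2) = - r" by (simp add: r_def)
    have "rho * (norm ((xs - xs) - (x1 - x2)))^2 \<ge> 0" using rho0 by simp
    hence "inner (y - ys) ((xs - xs) - (x1 - x2)) \<ge> QM (xs - x2)" using kk by linarith
    hence "- inner v r \<ge> QM (x2 - xs)"
      unfolding e0 QM_swap[of xs x2] by (simp add: v_def inner_minus_right)
    moreover have "- inner v r \<le> norm v * s" using Cauchy_Schwarz_ineq2[of v r] unfolding s_def by linarith
    moreover have "A^2 = QM (x2 - xs)" by (simp add: A_def QM_nonneg)
    ultimately have h2: "A^2 \<le> norm v * s" by linarith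
    have "norm v \<le> \<tau> * s" unfolding \<tau>_def
      by (rule final_bound[OF norm_ge_zero _ A0 k0 rho0 h1 h2]) (simp add: s_def)
    moreover have "ys \<in> dual_maximizers (aug_dual G j phi d lam w b rho)" by (rule maxim[OF mys])
    hence "infdist y (dual_maximizers (aug_dual G j phi d lam w b rho)) \<le> dist y ys" by (rule infdist_le)
    ultimately show ?thesis by (simp add: dist_norm v_def Rr s_def)
  qed
  thus ?thesis using tau0 by blast
qed

end

theorem lemma3p1:
  fixes G :: "nat set set" and d :: nat
    and j :: "nat set \<Rightarrow> 'n::finite set" and phi :: "nat set \<Rightarrow> 'n \<Rightarrow> nat"
    and lam rho :: real and w :: "nat set \<Rightarrow> real" and b :: "nat \<Rightarrow> real"
  assumes "finite G"
    and "\<forall>g\<in>G. g \<noteq> {} \<and> g \<subseteq> {1..d}"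
    and "CARD('n) = (\<Sum>g\<in>G. card g)"
    and "\<forall>g\<in>G. \<forall>h\<in>G. g \<noteq> h \<longrightarrow> j g \<inter> j h = {}"
    and "\<forall>g\<in>G. card (j g) = card g"
    and "\<forall>g\<in>G. bij_betw (phi g) (j g) g"
    and "lam > 0" and "\<forall>g\<in>G. w g > 0" and "rho > 0"
  shows "\<exists>\<tau>>0. \<forall>y::real^'n. \<exists>D.
           GDERIV (aug_dual G j phi d lam w b rho) y :> D \<and>
           infdist y (dual_maximizers (aug_dual G j phi d lam w b rho)) \<le> \<tau> * norm D"
proof -
  interpret L: lg G d j phi lam rho w b
    using assms by unfold_locales auto
  obtain \<tau> where t: "\<tau> > 0" and hb: "\<forall>y. infdist y (dual_maximizers (aug_dual G j phi d lam w b rho)) \<le> \<tau> * norm (L.Rf y)"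
    using L.err_bound by blast
  show ?thesis
  proof (rule exI[of _ \<tau>], intro conjI allI)
    show "\<tau> > 0" by (rule t)
    fix y :: "real^'n"
    show "\<exists>D. GDERIV (aug_dual G j phi d lam w b rho) y :> D \<and>
           infdist y (dual_maximizers (aug_dual G j phi d lam w b rho)) \<le> \<tau> * norm D"
      by (rule exI[of _ "L.Rf y"]) (use L.gderiv_Rf[of y] hb in simp)
  qed
qed


end
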